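(* Let $f\in C(I)$, the partition $\Delta$ and scaling functions $\alpha_{i,r}\in C(I)$ with $\|\alpha\|_\infty<1$ be fixed. Let $A$ be the set of sequences $b=\{b_r\}_{r\in\mathbb{N}}$ with $b_r\in C(I)$, $b_r(x_0)=f(x_0)$, $b_r(x_N)=f(x_N)$ for all $r$, and $\sup_r\|b_r\|_\infty<\infty$, with the metric $\|b-c\|_\infty=\sup_{r}\|b_r-c_r\|_\infty$. Then the map $\mathcal{A}:A\to C(I)$, $\mathcal{A}(b)=f^\alpha_{\Delta,b}$, is Lipschitz continuous (with respect to the supremum norm on $C(I)$).
   Context: $I=[x_0,x_N]$ with partition $\Delta: x_0<x_1<\dots<x_N$, $I_i=[x_{i-1},x_i]$, $l_i:I\to I_i$ the affine bijection $l_i(x)=\frac{x_i-x_{i-1}}{x_N-x_0}x+\frac{x_Nx_{i-1}-x_0x_i}{x_N-x_0}$, $Q_i=l_i^{-1}$. $\|\alpha\|_\infty:=\sup_r\max_i\|\alpha_{i,r}\|_\infty$. For $b\in A$, $f^\alpha_{\Delta,b}$ (the non-stationary $\alpha$-fractal function) is the uniform limit, independent of $g\in C_f(I)=\{g\in C(I):g(x_0)=f(x_0),g(x_N)=f(x_N)\}$, of $T^{\alpha_1}\circ\cdots\circ T^{\alpha_r}g$, where $(T^{\alpha_r}g)(x)=f(x)+\alpha_{i,r}(Q_i(x))(g-b_r)(Q_i(x))$ for $x\in I_i$. *)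

theory Defs
  imports "HOL-Analysis.Analysis"
begin

definition Ival :: "(nat \<Rightarrow> real) \<Rightarrow> nat \<Rightarrow> real set" where
  "Ival x N = {x 0 .. x N}"

definition is_partition :: "(nat \<Rightarrow> real) \<Rightarrow> nat \<Rightarrow> bool" where
  "is_partition x N \<longleftrightarrow> N \<ge> 1 \<and> (\<forall>i<N. x i < x (Suc i))"

text \<open>The affine map l_i : I -> I_i and its inverse Q_i.\<close>

definition lmap :: "(nat \<Rightarrow> real) \<Rightarrow> nat \<Rightarrow> nat \<Rightarrow> real \<Rightarrow> real" where
  "lmap x N i t = (x i - x (i - 1)) / (x N - x 0) * t
                 + (x N * x (i - 1) - x 0 * x i) / (x N - x 0)"

definition Qmap :: "(nat \<Rightarrow> real) \<Rightarrow> nat \<Rightarrow> nat \<Rightarrow> real \<Rightarrow> real" where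
  "Qmap x N i s = ((x N - x 0) * s - (x N * x (i - 1) - x 0 * x i)) / (x i - x (i - 1))"

text \<open>Index i (1 <= i <= N) of the subinterval I_i = [x (i-1), x i] containing t
  (the least one, for nodes; at interior nodes both choices agree on C_f).\<close>

definition sub_index :: "(nat \<Rightarrow> real) \<Rightarrow> real \<Rightarrow> nat" where
  "sub_index x t = (LEAST i. 1 \<le> i \<and> t \<le> x i)"

definition Top :: "(nat \<Rightarrow> real) \<Rightarrow> nat \<Rightarrow> (real \<Rightarrow> real) \<Rightarrow> (nat \<Rightarrow> nat \<Rightarrow> real \<Rightarrow> real)
                   \<Rightarrow> (nat \<Rightarrow> real \<Rightarrow> real) \<Rightarrow> nat \<Rightarrow> (real \<Rightarrow> real) \<Rightarrow> real \<Rightarrow> real" where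
  "Top x N f \<alpha> b r g t =
     (let i = sub_index x t; q = Qmap x N i t in f t + \<alpha> i r q * (g q - b r q))"

definition Tcomp :: "(nat \<Rightarrow> real) \<Rightarrow> nat \<Rightarrow> (real \<Rightarrow> real) \<Rightarrow> (nat \<Rightarrow> nat \<Rightarrow> real \<Rightarrow> real)
                   \<Rightarrow> (nat \<Rightarrow> real \<Rightarrow> real) \<Rightarrow> nat \<Rightarrow> (real \<Rightarrow> real) \<Rightarrow> real \<Rightarrow> real" where
  "Tcomp x N f \<alpha> b m g = foldr (\<lambda>r h. Top x N f \<alpha> b r h) [1..<Suc m] g"

definition Cf :: "(nat \<Rightarrow> real) \<Rightarrow> nat \<Rightarrow> (real \<Rightarrow> real) \<Rightarrow> (real \<Rightarrow> real) set" where
  "Cf x N f = {g. continuous_on (Ival x N) g \<and> g (x 0) = f (x 0) \<and> g (x N) = f (x N)}"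

definition fractal :: "(nat \<Rightarrow> real) \<Rightarrow> nat \<Rightarrow> (real \<Rightarrow> real) \<Rightarrow> (nat \<Rightarrow> nat \<Rightarrow> real \<Rightarrow> real)
                   \<Rightarrow> (nat \<Rightarrow> real \<Rightarrow> real) \<Rightarrow> real \<Rightarrow> real" where
  "fractal x N f \<alpha> b = (THE \<phi>. (\<forall>g \<in> Cf x N f.
       uniform_limit (Ival x N) (\<lambda>m. Tcomp x N f \<alpha> b m g) \<phi> sequentially)
     \<and> (\<forall>t. t \<notin> Ival x N \<longrightarrow> \<phi> t = 0))"

definition Aset :: "(nat \<Rightarrow> real) \<Rightarrow> nat \<Rightarrow> (real \<Rightarrow> real) \<Rightarrow> (nat \<Rightarrow> real \<Rightarrow> real) set" where
  "Aset x N f = {b. (\<forall>r\<ge>1. continuous_on (Ival x N) (b r) \<and> b r (x 0) = f (x 0)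
                        \<and> b r (x N) = f (x N))
                  \<and> (\<exists>M. \<forall>r\<ge>1. \<forall>t\<in>Ival x N. \<bar>b r t\<bar> \<le> M)}"

definition seqdist :: "(nat \<Rightarrow> real) \<Rightarrow> nat \<Rightarrow> (nat \<Rightarrow> real \<Rightarrow> real) \<Rightarrow> (nat \<Rightarrow> real \<Rightarrow> real) \<Rightarrow> real" where
  "seqdist x N b c = (SUP r\<in>{1..}. SUP t\<in>Ival x N. \<bar>b r t - c r t\<bar>)"

end

theory Submission
  imports Defs
begin


definition FF :: "(nat \<Rightarrow> real) \<Rightarrow> nat \<Rightarrow> (real \<Rightarrow> real) \<Rightarrow> (nat \<Rightarrow> nat \<Rightarrow> real \<Rightarrow> real)
                   \<Rightarrow> (nat \<Rightarrow> real \<Rightarrow> real) \<Rightarrow> nat \<Rightarrow> nat \<Rightarrow> (real \<Rightarrow> real) \<Rightarrow> real \<Rightarrow> real" where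
  "FF x N f \<alpha> b k n g = foldr (\<lambda>r h. Top x N f \<alpha> b r h) [k..<k+n] g"

lemma FF_0: "FF x N f \<alpha> b k 0 g = g"
  by (simp add: FF_def)

lemma FF_Suc: "FF x N f \<alpha> b k (Suc n) g = Top x N f \<alpha> b k (FF x N f \<alpha> b (Suc k) n g)"
proof -
  have "[k..<k + Suc n] = k # [Suc k..<Suc k + n]"
    by (metis add_Suc add_Suc_right less_add_Suc1 upt_conv_Cons)
  then show ?thesis unfolding FF_def by (simp only: foldr.simps o_apply)
qed

lemma FF_add: "FF x N f \<alpha> b k (n + p) g = FF x N f \<alpha> b k n (FF x N f \<alpha> b (k + n) p g)"
proof -
  have "[k..<k + (n + p)] = [k..<k + n] @ [k + n..<k + n + p]"
    by (metis upt_add_eq_append le_add1 add.assoc)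
  then show ?thesis unfolding FF_def by (simp only: foldr_append o_apply)
qed

lemma Tcomp_FF: "Tcomp x N f \<alpha> b m g = FF x N f \<alpha> b 1 m g"
  by (simp add: Tcomp_def FF_def)

lemma aff1: "(a::real) < b \<Longrightarrow> ((xN - x0) * t - (xN * a - x0 * b)) / (b - a) - x0 = (xN - x0) * (t - a) / (b - a)"
  by (simp add: field_simps)
lemma aff2: "(a::real) < b \<Longrightarrow> xN - ((xN - x0) * t - (xN * a - x0 * b)) / (b - a) = (xN - x0) * (b - t) / (b - a)"
  by (simp add: field_simps)

lemma Q_in:
  assumes part: "is_partition x N" and t: "t \<in> Ival x N"
  shows "sub_index x t \<in> {1..N} \<and> Qmap x N (sub_index x t) t \<in> Ival x N"
proof -
  define i where "i = sub_index x t"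
  have N1: "1 \<le> N \<and> t \<le> x N" using part t by (auto simp: is_partition_def Ival_def)
  have i1: "1 \<le> i \<and> t \<le> x i" unfolding i_def sub_index_def by (rule LeastI[of "\<lambda>i. 1 \<le> i \<and> t \<le> x i", OF N1])
  have iN: "i \<le> N" unfolding i_def sub_index_def by (rule Least_le[of "\<lambda>i. 1 \<le> i \<and> t \<le> x i", OF N1])
  have lo: "x (i - 1) \<le> t"
  proof (cases "i = 1")
    case True then show ?thesis using t by (simp add: Ival_def)
  next
    case False
    then have "i - 1 < i" "1 \<le> i - 1" using i1 by auto
    then have "i - 1 < (LEAST i. 1 \<le> i \<and> t \<le> x i)" unfolding i_def sub_index_def by simp
    then have "\<not> (1 \<le> i - 1 \<and> t \<le> x (i - 1))" by (rule not_less_Least)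
    then show ?thesis using \<open>1 \<le> i - 1\<close> by auto
  qed
  have "i - 1 < N" using i1 iN by arith
  then have "x (i - 1) < x (Suc (i - 1))" using part by (simp add: is_partition_def)
  moreover have "Suc (i - 1) = i" using i1 by arith
  ultimately have lt: "x (i - 1) < x i" by simp
  have x0N: "x 0 \<le> x N" using t by (simp add: Ival_def)
  have e1: "Qmap x N i t - x 0 = (x N - x 0) * (t - x (i - 1)) / (x i - x (i - 1))"
    unfolding Qmap_def by (rule aff1[OF lt])
  have e2: "x N - Qmap x N i t = (x N - x 0) * (x i - t) / (x i - x (i - 1))"
    unfolding Qmap_def by (rule aff2[OF lt])
  have "Qmap x N i t - x 0 \<ge> 0" unfolding e1 using lt lo x0N
    by (intro divide_nonneg_pos mult_nonneg_nonneg) auto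
  moreover have "x N - Qmap x N i t \<ge> 0" unfolding e2 using lt i1 x0N
    by (intro divide_nonneg_pos mult_nonneg_nonneg) auto
  ultimately have "x 0 \<le> Qmap x N i t" "Qmap x N i t \<le> x N" by auto
  then show ?thesis using i1 iN unfolding Ival_def i_def by auto
qed

lemma Top_diff:
  assumes part: "is_partition x N"
    and ab: "\<forall>r\<ge>1. \<forall>i\<in>{1..N}. \<forall>t\<in>Ival x N. \<bar>\<alpha> i r t\<bar> \<le> s"
    and r: "r \<ge> 1"
    and gh: "\<forall>u\<in>Ival x N. \<bar>g u - h u\<bar> \<le> D"
    and bc: "\<forall>u\<in>Ival x N. \<bar>b r u - c r u\<bar> \<le> d"
    and t: "t \<in> Ival x N"
  shows "\<bar>Top x N f \<alpha> b r g t - Top x N f \<alpha> c r h t\<bar> \<le> s * (D + d)"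
proof -
  define i where "i = sub_index x t"
  define q where "q = Qmap x N i t"
  have iq: "i \<in> {1..N}" "q \<in> Ival x N" using Q_in[OF part t] unfolding i_def q_def by auto
  have a: "\<bar>\<alpha> i r q\<bar> \<le> s" using ab r iq by blast
  have "Top x N f \<alpha> b r g t - Top x N f \<alpha> c r h t = \<alpha> i r q * ((g q - h q) - (b r q - c r q))"
    unfolding Top_def Let_def i_def[symmetric] q_def[symmetric] by (simp add: algebra_simps)
  also have "\<bar>\<dots>\<bar> = \<bar>\<alpha> i r q\<bar> * \<bar>(g q - h q) - (b r q - c r q)\<bar>" by (simp add: abs_mult)
  also have "\<dots> \<le> s * (D + d)"
  proof (rule mult_mono)
    have "\<bar>g q - h q\<bar> \<le> D" "\<bar>b r q - c r q\<bar> \<le> d" using gh bc iq by auto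
    then show "\<bar>g q - h q - (b r q - c r q)\<bar> \<le> D + d" by linarith
  qed (use a in auto)
  finally show ?thesis .
qed

lemma Top_bound:
  assumes part: "is_partition x N"
    and ab: "\<forall>r\<ge>1. \<forall>i\<in>{1..N}. \<forall>t\<in>Ival x N. \<bar>\<alpha> i r t\<bar> \<le> s"
    and r: "r \<ge> 1"
    and fb: "\<forall>u\<in>Ival x N. \<bar>f u\<bar> \<le> Fb"
    and gb: "\<forall>u\<in>Ival x N. \<bar>g u\<bar> \<le> M"
    and bb: "\<forall>u\<in>Ival x N. \<bar>b r u\<bar> \<le> B"
    and t: "t \<in> Ival x N"
  shows "\<bar>Top x N f \<alpha> b r g t\<bar> \<le> Fb + s * (M + B)"
proof -
  define i where "i = sub_index x t"
  define q where "q = Qmap x N i t"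
  have iq: "i \<in> {1..N}" "q \<in> Ival x N" using Q_in[OF part t] unfolding i_def q_def by auto
  have a: "\<bar>\<alpha> i r q\<bar> \<le> s" using ab r iq by blast
  have e: "Top x N f \<alpha> b r g t = f t + \<alpha> i r q * (g q - b r q)"
    unfolding Top_def Let_def i_def[symmetric] q_def[symmetric] by simp
  have "\<bar>\<alpha> i r q * (g q - b r q)\<bar> = \<bar>\<alpha> i r q\<bar> * \<bar>g q - b r q\<bar>" by (simp add: abs_mult)
  also have "\<dots> \<le> s * (M + B)"
  proof (rule mult_mono)
    have "\<bar>g q\<bar> \<le> M" "\<bar>b r q\<bar> \<le> B" using gb bb iq by auto
    then show "\<bar>g q - b r q\<bar> \<le> M + B" by linarith
  qed (use a in auto)
  finally have X: "\<bar>\<alpha> i r q * (g q - b r q)\<bar> \<le> s * (M + B)" .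
  have ft: "\<bar>f t\<bar> \<le> Fb" using fb t by blast
  have "\<bar>f t + \<alpha> i r q * (g q - b r q)\<bar> \<le> \<bar>f t\<bar> + \<bar>\<alpha> i r q * (g q - b r q)\<bar>" by (rule abs_triangle_ineq)
  then show ?thesis unfolding e using X ft by linarith
qed

lemma FF_diff:
  assumes part: "is_partition x N"
    and ab: "\<forall>r\<ge>1. \<forall>i\<in>{1..N}. \<forall>t\<in>Ival x N. \<bar>\<alpha> i r t\<bar> \<le> s"
    and s0: "0 \<le> s" and s1: "s < 1"
    and gh: "\<forall>u\<in>Ival x N. \<bar>g u - h u\<bar> \<le> D"
    and bc: "\<forall>r\<ge>1. \<forall>u\<in>Ival x N. \<bar>b r u - c r u\<bar> \<le> d"
    and d0: "0 \<le> d"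
  shows "k \<ge> 1 \<Longrightarrow> \<forall>t\<in>Ival x N. \<bar>FF x N f \<alpha> b k n g t - FF x N f \<alpha> c k n h t\<bar> \<le> s ^ n * D + d * s / (1 - s)"
proof (induction n arbitrary: k)
  case 0
  have "0 \<le> d * s / (1 - s)" using d0 s0 s1 by simp
  then show ?case using gh by (simp add: FF_0) (meson add_increasing2)
next
  case (Suc n)
  have IH: "\<forall>u\<in>Ival x N. \<bar>FF x N f \<alpha> b (Suc k) n g u - FF x N f \<alpha> c (Suc k) n h u\<bar> \<le> s ^ n * D + d * s / (1 - s)"
    using Suc.IH by simp
  have alg: "s * (s ^ n * D + d * s / (1 - s) + d) = s ^ Suc n * D + d * s / (1 - s)"
    using s1 by (simp add: field_simps)
  have bck: "\<forall>u\<in>Ival x N. \<bar>b k u - c k u\<bar> \<le> d" using bc Suc.prems by blast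
  show ?case unfolding FF_Suc
    using Top_diff[where r=k and b=b and c=c and g="FF x N f \<alpha> b (Suc k) n g" and h="FF x N f \<alpha> c (Suc k) n h", OF part ab Suc.prems IH bck] alg by auto
qed

lemma FF_bound:
  assumes part: "is_partition x N"
    and ab: "\<forall>r\<ge>1. \<forall>i\<in>{1..N}. \<forall>t\<in>Ival x N. \<bar>\<alpha> i r t\<bar> \<le> s"
    and fb: "\<forall>u\<in>Ival x N. \<bar>f u\<bar> \<le> Fb"
    and gb: "\<forall>u\<in>Ival x N. \<bar>g u\<bar> \<le> M"
    and bb: "\<forall>r\<ge>1. \<forall>u\<in>Ival x N. \<bar>b r u\<bar> \<le> B"
    and M: "Fb + s * B \<le> (1 - s) * M"
  shows "k \<ge> 1 \<Longrightarrow> \<forall>t\<in>Ival x N. \<bar>FF x N f \<alpha> b k n g t\<bar> \<le> M"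
proof (induction n arbitrary: k)
  case 0
  then show ?case using gb by (simp add: FF_0)
next
  case (Suc n)
  have IH: "\<forall>u\<in>Ival x N. \<bar>FF x N f \<alpha> b (Suc k) n g u\<bar> \<le> M"
    using Suc.IH by simp
  have bbk: "\<forall>u\<in>Ival x N. \<bar>b k u\<bar> \<le> B" using bb Suc.prems by blast
  have MM: "Fb + s * (M + B) \<le> M" using M by (simp add: algebra_simps)
  show ?case unfolding FF_Suc
    using Top_bound[where r=k and b=b and g="FF x N f \<alpha> b (Suc k) n g", OF part ab Suc.prems fb IH bbk] MM
    by (meson order_trans)
qed



lemma cont_bound:
  fixes g :: "real \<Rightarrow> real"
  assumes "continuous_on (Ival x N) g"
  shows "\<exists>M. \<forall>u\<in>Ival x N. \<bar>g u\<bar> \<le> M"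
proof -
  have cpt: "compact (Ival x N)" by (simp add: Ival_def)
  obtain B where "B \<ge> 0" "\<And>u. u \<in> Ival x N \<Longrightarrow> norm (g u) \<le> B"
    using continuous_on_compact_bound[OF cpt assms] by blast
  then show ?thesis by auto
qed

lemma geo_eventually:
  fixes s C e :: real
  assumes s0: "0 \<le> s" and s1: "s < 1" and e: "e > 0"
  shows "\<exists>M. \<forall>n\<ge>M. C * s ^ n < e"
proof -
  have "(\<lambda>n. C * s ^ n) \<longlonglongrightarrow> 0"
    by (intro tendsto_mult_right_zero LIMSEQ_power_zero) (use s0 s1 in simp)
  from order_tendstoD(2)[OF this e] show ?thesis by (simp add: eventually_sequentially)
qed

lemma unif_cauchy:
  fixes G :: "nat \<Rightarrow> real \<Rightarrow> real"
  assumes s0: "0 \<le> s" and s1: "s < 1"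
    and H: "\<forall>m p. \<forall>t\<in>I. \<bar>G (m + p) t - G m t\<bar> \<le> C * s ^ m"
  shows "uniformly_Cauchy_on I G"
proof (rule uniformly_Cauchy_onI')
  fix e :: real assume e: "e > 0"
  obtain M where M: "\<forall>n\<ge>M. C * s ^ n < e" using geo_eventually[OF s0 s1 e] by blast
  show "\<exists>M. \<forall>x\<in>I. \<forall>m\<ge>M. \<forall>n>m. dist (G m x) (G n x) < e"
  proof (intro exI ballI allI impI)
    fix x m n assume x: "x \<in> I" and m: "M \<le> m" and n: "m < n"
    have eq: "n = m + (n - m)" using n by simp
    have "\<bar>G (m + (n - m)) x - G m x\<bar> \<le> C * s ^ m" using H x by blast
    then have "\<bar>G n x - G m x\<bar> \<le> C * s ^ m" using eq by metis
    moreover have "C * s ^ m < e" using M m by blast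
    ultimately show "dist (G m x) (G n x) < e" by (simp add: dist_real_def abs_minus_commute)
  qed
qed

lemma unif_transfer:
  fixes G H :: "nat \<Rightarrow> real \<Rightarrow> real"
  assumes s0: "0 \<le> s" and s1: "s < 1"
    and D: "\<forall>m. \<forall>t\<in>I. \<bar>G m t - H m t\<bar> \<le> C * s ^ m"
    and L: "uniform_limit I H \<phi> sequentially"
  shows "uniform_limit I G \<phi> sequentially"
  unfolding uniform_limit_sequentially_iff
proof (intro allI impI)
  fix e :: real assume e: "e > 0"
  then have e2: "e / 2 > 0" by simp
  obtain N1 where N1: "\<forall>n\<ge>N1. \<forall>x\<in>I. dist (H n x) (\<phi> x) < e / 2"
    using L e2 unfolding uniform_limit_sequentially_iff by blast
  obtain N2 where N2: "\<forall>n\<ge>N2. C * s ^ n < e / 2" using geo_eventually[OF s0 s1 e2] by blast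
  show "\<exists>N. \<forall>n\<ge>N. \<forall>x\<in>I. dist (G n x) (\<phi> x) < e"
  proof (intro exI allI impI ballI)
    fix n x assume n: "max N1 N2 \<le> n" and x: "x \<in> I"
    have a: "dist (H n x) (\<phi> x) < e / 2" using N1 n x by auto
    have b: "C * s ^ n < e / 2" using N2 n by auto
    have c: "\<bar>G n x - H n x\<bar> \<le> C * s ^ n" using D x by blast
    show "dist (G n x) (\<phi> x) < e" using a b c unfolding dist_real_def by linarith
  qed
qed

lemma Tcomp_cauchy_bound:
  assumes part: "is_partition x N"
    and ab: "\<forall>r\<ge>1. \<forall>i\<in>{1..N}. \<forall>t\<in>Ival x N. \<bar>\<alpha> i r t\<bar> \<le> s"
    and s0: "0 \<le> s" and s1: "s < 1"
    and fb: "\<forall>u\<in>Ival x N. \<bar>f u\<bar> \<le> Fb"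
    and bb: "\<forall>r\<ge>1. \<forall>u\<in>Ival x N. \<bar>b r u\<bar> \<le> B"
    and gb: "\<forall>u\<in>Ival x N. \<bar>g u\<bar> \<le> Mg"
  shows "\<exists>C\<ge>0. \<forall>m p. \<forall>t\<in>Ival x N. \<bar>Tcomp x N f \<alpha> b (m + p) g t - Tcomp x N f \<alpha> b m g t\<bar> \<le> C * s ^ m"
proof -
  define M where "M = max (max Mg 0) ((Fb + s * B) / (1 - s))"
  have M0: "M \<ge> 0" unfolding M_def by simp
  have gM: "\<forall>u\<in>Ival x N. \<bar>g u\<bar> \<le> M" using gb unfolding M_def by (meson max.coboundedI1 order_trans)
  have "(Fb + s * B) / (1 - s) \<le> M" unfolding M_def by simp
  then have MM: "Fb + s * B \<le> (1 - s) * M" using s1 by (simp add: pos_divide_le_eq mult.commute)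
  show ?thesis
  proof (intro exI[of _ "2 * M"] conjI allI ballI)
    show "0 \<le> 2 * M" using M0 by simp
    fix m p t assume t: "t \<in> Ival x N"
    define G where "G = FF x N f \<alpha> b (1 + m) p g"
    have GM: "\<forall>u\<in>Ival x N. \<bar>G u\<bar> \<le> M"
      unfolding G_def by (rule FF_bound[OF part ab fb gM bb MM]) simp
    have GD: "\<forall>u\<in>Ival x N. \<bar>G u - g u\<bar> \<le> 2 * M"
    proof
      fix u assume u: "u \<in> Ival x N"
      then have "\<bar>G u\<bar> \<le> M" "\<bar>g u\<bar> \<le> M" using GM gM by auto
      then show "\<bar>G u - g u\<bar> \<le> 2 * M" by linarith
    qed
    have bc: "\<forall>r\<ge>1. \<forall>u\<in>Ival x N. \<bar>b r u - b r u\<bar> \<le> 0" by simp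
    have "\<forall>t\<in>Ival x N. \<bar>FF x N f \<alpha> b 1 m G t - FF x N f \<alpha> b 1 m g t\<bar> \<le> s ^ m * (2 * M) + 0 * s / (1 - s)"
      by (rule FF_diff[OF part ab s0 s1 GD bc]) simp_all
    then have "\<bar>FF x N f \<alpha> b 1 m G t - FF x N f \<alpha> b 1 m g t\<bar> \<le> 2 * M * s ^ m" using t by (simp add: mult.commute)
    moreover have "Tcomp x N f \<alpha> b (m + p) g = FF x N f \<alpha> b 1 m G"
      unfolding Tcomp_FF G_def FF_add by simp
    ultimately show "\<bar>Tcomp x N f \<alpha> b (m + p) g t - Tcomp x N f \<alpha> b m g t\<bar> \<le> 2 * M * s ^ m"
      by (simp add: Tcomp_FF)
  qed
qed

lemma Tcomp_g_diff:
  assumes part: "is_partition x N"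
    and ab: "\<forall>r\<ge>1. \<forall>i\<in>{1..N}. \<forall>t\<in>Ival x N. \<bar>\<alpha> i r t\<bar> \<le> s"
    and s0: "0 \<le> s" and s1: "s < 1"
    and gh: "\<forall>u\<in>Ival x N. \<bar>g u - h u\<bar> \<le> D"
  shows "\<forall>m. \<forall>t\<in>Ival x N. \<bar>Tcomp x N f \<alpha> b m g t - Tcomp x N f \<alpha> b m h t\<bar> \<le> D * s ^ m"
proof (intro allI ballI)
  fix m t assume t: "t \<in> Ival x N"
  have bc: "\<forall>r\<ge>1. \<forall>u\<in>Ival x N. \<bar>b r u - b r u\<bar> \<le> 0" by simp
  have "\<forall>t\<in>Ival x N. \<bar>FF x N f \<alpha> b 1 m g t - FF x N f \<alpha> b 1 m h t\<bar> \<le> s ^ m * D + 0 * s / (1 - s)"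
    by (rule FF_diff[OF part ab s0 s1 gh bc]) simp_all
  then show "\<bar>Tcomp x N f \<alpha> b m g t - Tcomp x N f \<alpha> b m h t\<bar> \<le> D * s ^ m"
    using t by (simp add: Tcomp_FF mult.commute)
qed

lemma fractal_lim:
  assumes part: "is_partition x N"
    and ab: "\<forall>r\<ge>1. \<forall>i\<in>{1..N}. \<forall>t\<in>Ival x N. \<bar>\<alpha> i r t\<bar> \<le> s"
    and s0: "0 \<le> s" and s1: "s < 1"
    and f_cont: "continuous_on (Ival x N) f"
    and b: "b \<in> Aset x N f"
    and t: "t \<in> Ival x N"
  shows "(\<lambda>m. Tcomp x N f \<alpha> b m f t) \<longlonglongrightarrow> fractal x N f \<alpha> b t"
proof -
  define I where "I = Ival x N"
  obtain Fb where fb: "\<forall>u\<in>Ival x N. \<bar>f u\<bar> \<le> Fb" using cont_bound[OF f_cont] by blast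
  obtain B where bb: "\<forall>r\<ge>1. \<forall>u\<in>Ival x N. \<bar>b r u\<bar> \<le> B" using b unfolding Aset_def by blast
  obtain C where C: "C \<ge> 0" "\<forall>m p. \<forall>t\<in>Ival x N. \<bar>Tcomp x N f \<alpha> b (m + p) f t - Tcomp x N f \<alpha> b m f t\<bar> \<le> C * s ^ m"
    using Tcomp_cauchy_bound[OF part ab s0 s1 fb bb fb] by blast
  have "uniformly_Cauchy_on I (\<lambda>m. Tcomp x N f \<alpha> b m f)"
    by (rule unif_cauchy[OF s0 s1]) (use C in \<open>simp add: I_def\<close>)
  then have "uniformly_convergent_on I (\<lambda>m. Tcomp x N f \<alpha> b m f)" by (rule Cauchy_uniformly_convergent)
  then obtain \<phi>0 where \<phi>0: "uniform_limit I (\<lambda>m. Tcomp x N f \<alpha> b m f) \<phi>0 sequentially"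
    unfolding uniformly_convergent_on_def by blast
  define \<phi> where "\<phi> = (\<lambda>t. if t \<in> I then \<phi>0 t else 0)"
  have \<phi>lim: "uniform_limit I (\<lambda>m. Tcomp x N f \<alpha> b m f) \<phi> sequentially"
    using \<phi>0 by (subst uniform_limit_cong'[where g="\<lambda>m. Tcomp x N f \<alpha> b m f" and i=\<phi>0]) (auto simp: \<phi>_def)
  define P where "P = (\<lambda>\<psi>. (\<forall>g \<in> Cf x N f.
       uniform_limit (Ival x N) (\<lambda>m. Tcomp x N f \<alpha> b m g) \<psi> sequentially)
     \<and> (\<forall>t. t \<notin> Ival x N \<longrightarrow> \<psi> t = 0))"
  have fCf: "f \<in> Cf x N f" using f_cont by (simp add: Cf_def)
  have P\<phi>: "P \<phi>"
    unfolding P_def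
  proof (intro conjI ballI allI impI)
    fix g assume g: "g \<in> Cf x N f"
    obtain Mg where gb: "\<forall>u\<in>Ival x N. \<bar>g u\<bar> \<le> Mg" using g cont_bound unfolding Cf_def by blast
    have gh: "\<forall>u\<in>Ival x N. \<bar>g u - f u\<bar> \<le> Mg + Fb"
    proof
      fix u assume "u \<in> Ival x N"
      then have "\<bar>g u\<bar> \<le> Mg" "\<bar>f u\<bar> \<le> Fb" using gb fb by auto
      then show "\<bar>g u - f u\<bar> \<le> Mg + Fb" by linarith
    qed
    show "uniform_limit (Ival x N) (\<lambda>m. Tcomp x N f \<alpha> b m g) \<phi> sequentially"
      by (rule unif_transfer[OF s0 s1 Tcomp_g_diff[OF part ab s0 s1 gh]]) (use \<phi>lim in \<open>simp add: I_def\<close>)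
  next
    fix t assume "t \<notin> Ival x N"
    then show "\<phi> t = 0" by (simp add: \<phi>_def I_def)
  qed
  have uniq: "\<psi> = \<phi>" if P\<psi>: "P \<psi>" for \<psi>
  proof
    fix u
    show "\<psi> u = \<phi> u"
    proof (cases "u \<in> I")
      case True
      have l1: "(\<lambda>m. Tcomp x N f \<alpha> b m f u) \<longlonglongrightarrow> \<psi> u"
      proof -
        have "uniform_limit (Ival x N) (\<lambda>m. Tcomp x N f \<alpha> b m f) \<psi> sequentially"
          using P\<psi> fCf unfolding P_def by blast
        then show ?thesis using True unfolding I_def by (rule tendsto_uniform_limitI)
      qed
      have l2: "(\<lambda>m. Tcomp x N f \<alpha> b m f u) \<longlonglongrightarrow> \<phi> u"
        using \<phi>lim True by (rule tendsto_uniform_limitI)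
      show ?thesis using l1 l2 by (rule LIMSEQ_unique)
    next
      case False
      then show ?thesis using P\<psi> P\<phi> unfolding P_def I_def by auto
    qed
  qed
  have "fractal x N f \<alpha> b = \<phi>"
    unfolding fractal_def P_def[symmetric] using P\<phi> uniq by (rule the_equality)
  then show ?thesis using \<phi>lim t unfolding I_def by (metis tendsto_uniform_limitI)
qed

lemma seqdist_ge:
  assumes b: "b \<in> Aset x N f" and c: "c \<in> Aset x N f" and r: "r \<ge> 1" and u: "u \<in> Ival x N"
  shows "\<bar>b r u - c r u\<bar> \<le> seqdist x N b c"
proof -
  obtain Bb where Bb: "\<forall>r\<ge>1. \<forall>t\<in>Ival x N. \<bar>b r t\<bar> \<le> Bb" using b unfolding Aset_def by blast
  obtain Bc where Bc: "\<forall>r\<ge>1. \<forall>t\<in>Ival x N. \<bar>c r t\<bar> \<le> Bc" using c unfolding Aset_def by blast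
  have bnd: "\<bar>b r' t - c r' t\<bar> \<le> Bb + Bc" if "r' \<ge> 1" "t \<in> Ival x N" for r' t
  proof -
    have "\<bar>b r' t\<bar> \<le> Bb" "\<bar>c r' t\<bar> \<le> Bc" using Bb Bc that by auto
    then show ?thesis by linarith
  qed
  define inner where "inner = (\<lambda>r'. SUP t\<in>Ival x N. \<bar>b r' t - c r' t\<bar>)"
  have bddi: "bdd_above ((\<lambda>t. \<bar>b r' t - c r' t\<bar>) ` Ival x N)" if "r' \<ge> 1" for r'
    using bnd that by (intro bdd_aboveI2[where M="Bb + Bc"]) auto
  have "\<bar>b r u - c r u\<bar> \<le> inner r" unfolding inner_def
    by (rule cSUP_upper[OF u bddi[OF r]])
  also have "inner r \<le> seqdist x N b c"
  proof -
    have "inner r' \<le> Bb + Bc" if "r' \<in> {1..}" for r'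
      unfolding inner_def using u that bnd by (intro cSUP_least) auto
    then have "bdd_above (inner ` {1..})" by (intro bdd_aboveI2[where M="Bb + Bc"]) auto
    then show ?thesis unfolding seqdist_def inner_def[symmetric] using r
      by (intro cSUP_upper) auto
  qed
  finally show ?thesis .
qed

theorem mainTheorem10:
  fixes x :: "nat \<Rightarrow> real" and N :: nat and f :: "real \<Rightarrow> real"
    and \<alpha> :: "nat \<Rightarrow> nat \<Rightarrow> real \<Rightarrow> real"
  assumes part: "is_partition x N"
    and f_cont: "continuous_on (Ival x N) f"
    and \<alpha>_cont: "\<forall>r\<ge>1. \<forall>i\<in>{1..N}. continuous_on (Ival x N) (\<alpha> i r)"
    and \<alpha>_norm: "\<exists>s<1. \<forall>r\<ge>1. \<forall>i\<in>{1..N}. \<forall>t\<in>Ival x N. \<bar>\<alpha> i r t\<bar> \<le> s"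
  shows "\<exists>L. \<forall>b\<in>Aset x N f. \<forall>c\<in>Aset x N f. \<forall>t\<in>Ival x N.
           \<bar>fractal x N f \<alpha> b t - fractal x N f \<alpha> c t\<bar> \<le> L * seqdist x N b c"
proof -
  obtain s0 where s0: "s0 < 1" "\<forall>r\<ge>1. \<forall>i\<in>{1..N}. \<forall>t\<in>Ival x N. \<bar>\<alpha> i r t\<bar> \<le> s0"
    using \<alpha>_norm by blast
  define s where "s = max s0 0"
  have sp: "0 \<le> s" "s < 1" using s0 unfolding s_def by auto
  have ab: "\<forall>r\<ge>1. \<forall>i\<in>{1..N}. \<forall>t\<in>Ival x N. \<bar>\<alpha> i r t\<bar> \<le> s"
    using s0(2) unfolding s_def by (meson max.coboundedI1 order_trans)
  show ?thesis
  proof (intro exI[of _ "s / (1 - s)"] ballI)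
    fix b c t assume b: "b \<in> Aset x N f" and c: "c \<in> Aset x N f" and t: "t \<in> Ival x N"
    define d where "d = seqdist x N b c"
    have bc: "\<forall>r\<ge>1. \<forall>u\<in>Ival x N. \<bar>b r u - c r u\<bar> \<le> d"
      unfolding d_def using seqdist_ge[OF b c] by blast
    have d0: "0 \<le> d" using bc t by (meson abs_ge_zero le_numeral_extra(4) order_trans)
    have ff: "\<forall>u\<in>Ival x N. \<bar>f u - f u\<bar> \<le> 0" by simp
    have est: "\<forall>t\<in>Ival x N. \<bar>FF x N f \<alpha> b 1 m f t - FF x N f \<alpha> c 1 m f t\<bar> \<le> s ^ m * 0 + d * s / (1 - s)" for m
      by (rule FF_diff[OF part ab sp ff bc d0]) simp
    have lim: "(\<lambda>m. \<bar>Tcomp x N f \<alpha> b m f t - Tcomp x N f \<alpha> c m f t\<bar>) \<longlonglongrightarrow>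
        \<bar>fractal x N f \<alpha> b t - fractal x N f \<alpha> c t\<bar>"
      by (intro tendsto_rabs tendsto_diff fractal_lim[OF part ab sp f_cont _ t] b c)
    have "\<bar>fractal x N f \<alpha> b t - fractal x N f \<alpha> c t\<bar> \<le> d * s / (1 - s)"
    proof (rule LIMSEQ_le_const2[OF lim], intro exI allI impI)
      fix m :: nat
      show "\<bar>Tcomp x N f \<alpha> b m f t - Tcomp x N f \<alpha> c m f t\<bar> \<le> d * s / (1 - s)"
        using est[of m] t by (simp add: Tcomp_FF)
    qed
    then show "\<bar>fractal x N f \<alpha> b t - fractal x N f \<alpha> c t\<bar> \<le> s / (1 - s) * seqdist x N b c"
      unfolding d_def by (simp add: mult.commute)
  qed
qed

end
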